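(* Let $n \geq 2$ be an integer and let $Q_{4n} = \langle a, b \mid a^{2n} = e,\ a^{n} = b^2,\ ab = ba^{-1} \rangle$ be the dicyclic group of order $4n$. Then the order supergraph $\mathcal{S}(Q_{4n})$ is cyclically separable if and only if $n$ is not a power of $2$.
   Context: All graphs are simple and undirected. For a finite group $G$, the order supergraph $\mathcal{S}(G)$ is the graph with vertex set $G$ in which two distinct vertices $x,y$ are adjacent if and only if the order of $x$ divides the order of $y$ or the order of $y$ divides the order of $x$. For a graph $\Gamma$, a vertex cutset is a set $S$ of vertices such that $\Gamma - S$ is disconnected; a cyclic vertex cutset is a vertex cutset $S$ such that $\Gamma - S$ has at least two connected components each of which contains a cycle. $\Gamma$ is called cyclically separable if it has a cyclic vertex cutset. *)

theory Defs
  imports "HOL-Algebra.Algebra"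
begin

text \<open>Concrete model: the pair (i, j) with i < 2n, j < 2 stands for the
  element a^i b^j of Q_{4n} = < a, b | a^{2n} = e, a^n = b^2, ab = b a^{-1} >.
  Multiplication rules: a^i a^k = a^{i+k}, a^i (a^k b) = a^{i+k} b,
  (a^i b) a^k = a^{i-k} b, (a^i b)(a^k b) = a^{i-k+n}, exponents mod 2n.\<close>

definition dicyclic_mult :: "nat \<Rightarrow> nat \<times> nat \<Rightarrow> nat \<times> nat \<Rightarrow> nat \<times> nat" where
  "dicyclic_mult n x y =
     (case x of (i, j) \<Rightarrow> case y of (k, l) \<Rightarrow>
        if j = 0 then ((i + k) mod (2 * n), l)
        else if l = 0 then ((i + 2 * n - k) mod (2 * n), 1)
        else ((i + 2 * n - k + n) mod (2 * n), 0))"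

definition dicyclic_group :: "nat \<Rightarrow> (nat \<times> nat) monoid" where
  "dicyclic_group n =
     \<lparr> carrier = {(i, j). i < 2 * n \<and> j < 2},
       monoid.mult = dicyclic_mult n,
       monoid.one = (0, 0) \<rparr>"

definition order_supergraph_adj :: "('a, 'b) monoid_scheme \<Rightarrow> 'a \<Rightarrow> 'a \<Rightarrow> bool" where
  "order_supergraph_adj G x y \<longleftrightarrow>
     x \<noteq> y \<and> (group.ord G x dvd group.ord G y \<or> group.ord G y dvd group.ord G x)"

definition reach :: "'a set \<Rightarrow> ('a \<Rightarrow> 'a \<Rightarrow> bool) \<Rightarrow> 'a \<Rightarrow> 'a \<Rightarrow> bool" where
  "reach V E = (\<lambda>u v. u \<in> V \<and> v \<in> V \<and> E u v)\<^sup>*\<^sup>*"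

definition components :: "'a set \<Rightarrow> ('a \<Rightarrow> 'a \<Rightarrow> bool) \<Rightarrow> 'a set set" where
  "components V E = {{y. reach V E x y} | x. x \<in> V}"

definition has_cycle :: "'a set \<Rightarrow> ('a \<Rightarrow> 'a \<Rightarrow> bool) \<Rightarrow> bool" where
  "has_cycle V E \<longleftrightarrow>
     (\<exists>xs. length xs \<ge> 3 \<and> distinct xs \<and> set xs \<subseteq> V \<and>
           (\<forall>i < length xs - 1. E (xs ! i) (xs ! Suc i)) \<and>
           E (last xs) (hd xs))"

definition cyclic_vertex_cutset :: "'a set \<Rightarrow> ('a \<Rightarrow> 'a \<Rightarrow> bool) \<Rightarrow> 'a set \<Rightarrow> bool" where
  "cyclic_vertex_cutset V E S \<longleftrightarrow> S \<subseteq> V \<and>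
     (\<exists>C1 C2. C1 \<in> components (V - S) E \<and> C2 \<in> components (V - S) E \<and> C1 \<noteq> C2 \<and>
              has_cycle C1 E \<and> has_cycle C2 E)"

definition cyclically_separable :: "'a set \<Rightarrow> ('a \<Rightarrow> 'a \<Rightarrow> bool) \<Rightarrow> bool" where
  "cyclically_separable V E \<longleftrightarrow> (\<exists>S. cyclic_vertex_cutset V E S)"

end

theory Submission
  imports Defs
begin

lemma modI: "int a mod int N = int b mod int N \<Longrightarrow> a mod N = b mod (N::nat)"
  by (metis of_nat_eq_iff zmod_int)
lemma imod3: "0 \<le> x \<Longrightarrow> x < 3*(N::int) \<Longrightarrow> x mod N = (if x < N then x else if x < 2*N then x - N else x - 2*N)"
proof -
  assume a: "0 \<le> x" "x < 3*N"
  have e1: "x mod N = (x - N) mod N" using mod_add_self2[of "x - N" N] by simp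
  have e2: "x mod N = (x - 2*N) mod N" using mod_mult_self1[of "x - 2*N" 2 N] by simp
  show ?thesis
  proof (cases "x < N")
    case True then show ?thesis using a by (simp add: mod_pos_pos_trivial)
  next
    case F: False
    show ?thesis
    proof (cases "x < 2*N")
      case True
      have "(x - N) mod N = x - N" apply (rule mod_pos_pos_trivial) using F True by linarith+
      with e1 have "x mod N = x - N" by (rule trans)
      with F True show ?thesis by simp
    next
      case False
      have "(x - 2*N) mod N = x - 2*N" apply (rule mod_pos_pos_trivial) using False a by linarith+
      with e2 have "x mod N = x - 2*N" by (rule trans)
      with F False show ?thesis by simp
    qed
  qed
qed
lemma mle: "(N::nat) > 0 \<Longrightarrow> a mod N \<le> b + N" using mod_less_divisor[of N a] by linarith
lemma mle2: "(n::nat) > 0 \<Longrightarrow> a mod (2*n) \<le> b + 2*n" using mod_less_divisor[of "2*n" a] by linarith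
lemma mle3: "(n::nat) > 0 \<Longrightarrow> a mod (2*n) \<le> 3*n + b" using mod_less_divisor[of "2*n" a] by linarith
lemma mle4: "(n::nat) > 0 \<Longrightarrow> a mod (2*n) \<le> 2*n + b" using mod_less_divisor[of "2*n" a] by linarith
lemma assoc0: assumes "n > 0" "i < 2*n" "k < 2*n" "r < 2*n" "j < 2" "l < 2" "s < 2"
  shows "dicyclic_mult n (dicyclic_mult n (i,j) (k,l)) (r,s) = dicyclic_mult n (i,j) (dicyclic_mult n (k,l) (r,s))"
  using assms
  apply (auto simp: dicyclic_mult_def less_2_cases_iff)
  apply (rule modI; simp add: of_nat_diff zmod_int mle2 mle3 mle4; simp add: imod3 split: if_split)+
  done
lemma inv_aux: "n > 0 \<Longrightarrow> i < 2*n \<Longrightarrow> (3 * n + (n + i) mod (2 * n) - i) mod (2 * n) = (0::nat)"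
  apply (subgoal_tac "(3 * n + (n + i) mod (2 * n) - i) mod (2 * n) = 0 mod (2*n)", simp)
  apply (rule modI; simp add: of_nat_diff zmod_int mle2 mle3 mle4; simp add: imod3 split: if_split)
  done

lemma inv_aux2: "n > 0 \<Longrightarrow> i < 2*n \<Longrightarrow> ((2*n - i) mod (2 * n) + i) mod (2 * n) = (0::nat)"
proof -
  assume "n > 0" "i < 2*n"
  have "((2*n - i) mod (2 * n) + i) mod (2 * n) = ((2*n - i) + i) mod (2 * n)" by (rule mod_add_left_eq)
  also have "(2*n - i) + i = 2*n" using \<open>i < 2*n\<close> by simp
  finally show ?thesis by simp
qed

lemma dg_group: assumes "n > 0" shows "group (dicyclic_group n)"
proof (rule groupI)
  fix x y assume "x \<in> carrier (dicyclic_group n)" "y \<in> carrier (dicyclic_group n)"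
  then show "x \<otimes>\<^bsub>dicyclic_group n\<^esub> y \<in> carrier (dicyclic_group n)"
    using assms by (auto simp: dicyclic_group_def dicyclic_mult_def)
next
  show "\<one>\<^bsub>dicyclic_group n\<^esub> \<in> carrier (dicyclic_group n)"
    using assms by (auto simp: dicyclic_group_def)
next
  fix x y z assume "x \<in> carrier (dicyclic_group n)" "y \<in> carrier (dicyclic_group n)" "z \<in> carrier (dicyclic_group n)"
  then show "x \<otimes>\<^bsub>dicyclic_group n\<^esub> y \<otimes>\<^bsub>dicyclic_group n\<^esub> z =
           x \<otimes>\<^bsub>dicyclic_group n\<^esub> (y \<otimes>\<^bsub>dicyclic_group n\<^esub> z)"
    using assms by (auto simp: dicyclic_group_def intro!: assoc0)
next
  fix x assume "x \<in> carrier (dicyclic_group n)"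
  then show "\<one>\<^bsub>dicyclic_group n\<^esub> \<otimes>\<^bsub>dicyclic_group n\<^esub> x = x"
    using assms by (auto simp: dicyclic_group_def dicyclic_mult_def)
next
  fix x assume x: "x \<in> carrier (dicyclic_group n)"
  then obtain i j where ij: "x = (i,j)" "i < 2*n" "j < 2" by (auto simp: dicyclic_group_def)
  show "\<exists>y\<in>carrier (dicyclic_group n). y \<otimes>\<^bsub>dicyclic_group n\<^esub> x = \<one>\<^bsub>dicyclic_group n\<^esub>"
  proof (cases "j = 0")
    case True
    show ?thesis
      by (rule bexI[of _ "((2*n - i) mod (2*n), 0)"])
         (use assms ij True inv_aux2 in \<open>auto simp: dicyclic_group_def dicyclic_mult_def\<close>)
  next
    case False
    show ?thesis
      by (rule bexI[of _ "((n + i) mod (2*n), 1)"])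
         (use assms ij False inv_aux in \<open>auto simp: dicyclic_group_def dicyclic_mult_def\<close>)
  qed
qed

lemma powS: "x [^]\<^bsub>G\<^esub> (Suc m) = x [^]\<^bsub>G\<^esub> m \<otimes>\<^bsub>G\<^esub> x" by (simp add: nat_pow_def)
lemma pow0: "x [^]\<^bsub>G\<^esub> (0::nat) = \<one>\<^bsub>G\<^esub>" by (simp add: nat_pow_def)

lemma pow_a: "n > 0 \<Longrightarrow> (i,0) [^]\<^bsub>dicyclic_group n\<^esub> (m::nat) = ((m*i) mod (2*n), 0)"
proof (induction m)
  case 0 then show ?case by (simp add: pow0 dicyclic_group_def)
next
  case (Suc m)
  have "((m*i) mod (2*n) + i) mod (2*n) = (m*i + i) mod (2*n)" by (rule mod_add_left_eq)
  then show ?case using Suc by (simp add: powS dicyclic_group_def dicyclic_mult_def add.commute)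
qed

lemma pow_b: assumes "n > 0" "i < 2*n"
  shows "(i,1) [^]\<^bsub>dicyclic_group n\<^esub> (m::nat) = (if m mod 4 = 0 then (0,0) else if m mod 4 = 1 then (i,1)
          else if m mod 4 = 2 then (n,0) else ((n+i) mod (2*n), 1))"
proof (induction m)
  case 0 then show ?case by (simp add: pow0 dicyclic_group_def)
next
  case (Suc m)
  have c: "m mod 4 = 0 \<or> m mod 4 = 1 \<or> m mod 4 = 2 \<or> m mod 4 = 3" by arith
  have "(n + 2*n) mod (2*n) = n" using assms by simp
  then have m3: "(3 * n) mod (2*n) = n" by (simp add: numeral_3_eq_3)
  show ?case using c
    apply (elim disjE)
    using Suc assms inv_aux[OF assms] m3
    by (simp_all add: powS dicyclic_group_def dicyclic_mult_def mod_Suc)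
qed
lemma ord_b: assumes "n > 0" "i < 2*n" shows "group.ord (dicyclic_group n) (i,1) = 4"
proof -
  interpret group "dicyclic_group n" by (rule dg_group[OF assms(1)])
  have c: "(i,1) \<in> carrier (dicyclic_group n)" using assms by (simp add: dicyclic_group_def)
  have "\<forall>m. (i,1) [^]\<^bsub>dicyclic_group n\<^esub> (m::nat) = \<one>\<^bsub>dicyclic_group n\<^esub> \<longleftrightarrow> 4 dvd m"
    unfolding pow_b[OF assms] using assms by (simp add: dicyclic_group_def dvd_eq_mod_eq_0)
  then show ?thesis using ord_unique[OF c] by blast
qed

lemma ord_a: assumes "n > 0" "i < 2*n" "\<And>m. (m*i) mod (2*n) = 0 \<longleftrightarrow> d dvd m"
  shows "group.ord (dicyclic_group n) (i,0) = d"
proof -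
  interpret group "dicyclic_group n" by (rule dg_group[OF assms(1)])
  have c: "(i,0) \<in> carrier (dicyclic_group n)" using assms by (simp add: dicyclic_group_def)
  have "\<forall>m. (i,0) [^]\<^bsub>dicyclic_group n\<^esub> (m::nat) = \<one>\<^bsub>dicyclic_group n\<^esub> \<longleftrightarrow> d dvd m"
    using assms by (simp add: pow_a, simp add: dicyclic_group_def)
  then show ?thesis using ord_unique[OF c] by blast
qed

lemma ord_a_dvd: assumes "n > 0" "i < 2*n"
  shows "group.ord (dicyclic_group n) (i,0) dvd 2*n"
proof -
  interpret group "dicyclic_group n" by (rule dg_group[OF assms(1)])
  have c: "(i,0) \<in> carrier (dicyclic_group n)" using assms by (simp add: dicyclic_group_def)
  have "(i,0) [^]\<^bsub>dicyclic_group n\<^esub> (2*n) = \<one>\<^bsub>dicyclic_group n\<^esub>"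
    using assms by (simp add: pow_a, simp add: dicyclic_group_def)
  then show ?thesis using pow_eq_id[OF c] by blast
qed

lemma complete_not_sep: assumes "\<forall>u\<in>V. \<forall>v\<in>V. u \<noteq> v \<longrightarrow> E u v" shows "\<not> cyclically_separable V E"
proof
  assume "cyclically_separable V E"
  then obtain S C1 C2 where C: "C1 \<in> components (V-S) E" "C2 \<in> components (V-S) E" "C1 \<noteq> C2"
    by (auto simp: cyclically_separable_def cyclic_vertex_cutset_def)
  from C obtain x1 x2 where x: "x1 \<in> V-S" "C1 = {y. reach (V-S) E x1 y}" "x2 \<in> V-S" "C2 = {y. reach (V-S) E x2 y}"
    by (auto simp: components_def)
  have r: "reach (V-S) E u v" if "u\<in>V-S" "v\<in>V-S" for u v
  proof (cases "u = v")
    case True then show ?thesis by (simp add: reach_def)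
  next
    case False then show ?thesis using that assms unfolding reach_def by (intro r_into_rtranclp) auto
  qed
  have "C1 = C2" unfolding x
    using r[OF x(1) x(3)] r[OF x(3) x(1)] unfolding reach_def by (auto intro: rtranclp_trans)
  with C show False by simp
qed

lemma sep: assumes "distinct [a1,a2,a3::'a]" "distinct [b1,b2,b3]" "{a1,a2,a3} \<subseteq> V" "{b1,b2,b3} \<subseteq> V"
  "\<forall>u\<in>{a1,a2,a3}. \<forall>v\<in>{a1,a2,a3}. u \<noteq> v \<longrightarrow> E u v"
  "\<forall>u\<in>{b1,b2,b3}. \<forall>v\<in>{b1,b2,b3}. u \<noteq> v \<longrightarrow> E u v"
  "\<forall>u\<in>{b1,b2,b3}. \<forall>v\<in>{a1,a2,a3}. \<not> E u v"
  "{a1,a2,a3} \<inter> {b1,b2,b3} = {}"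
  shows "cyclically_separable V E"
proof -
  define A where "A = {a1,a2,a3}"
  define B where "B = {b1,b2,b3}"
  define S where "S = V - (A \<union> B)"
  have W: "V - S = A \<union> B" using assms(3,4) unfolding S_def A_def B_def by auto
  have inv: "reach (A \<union> B) E u v \<Longrightarrow> u \<in> B \<Longrightarrow> v \<in> B" for u v
    unfolding reach_def
  proof (induction rule: rtranclp_induct)
    case base then show ?case by simp
  next
    case (step y z) then show ?case using assms(7) unfolding A_def B_def by blast
  qed
  have ra: "reach (A \<union> B) E a1 v" if "v \<in> A" for v
    using that assms(1,5) unfolding reach_def A_def by (auto intro: r_into_rtranclp)
  have rb: "reach (A \<union> B) E b1 v" if "v \<in> B" for v
    using that assms(2,6) unfolding reach_def B_def by (auto intro: r_into_rtranclp)
  define C1 where "C1 = {y. reach (A \<union> B) E a1 y}"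
  define C2 where "C2 = {y. reach (A \<union> B) E b1 y}"
  have "a1 \<in> C1" using ra unfolding C1_def A_def by simp
  moreover have "a1 \<notin> C2" using inv[of b1 a1] assms(8) unfolding C2_def A_def B_def by auto
  ultimately have ne: "C1 \<noteq> C2" by blast
  have c1: "C1 \<in> components (V - S) E" unfolding W C1_def components_def A_def by blast
  have c2: "C2 \<in> components (V - S) E" unfolding W C2_def components_def B_def by blast
  have lt2: "\<And>P. (\<forall>i<Suc (Suc 0). P i) \<longleftrightarrow> P 0 \<and> P 1"
    by (auto simp: less_Suc_eq)
  have h1: "has_cycle C1 E" unfolding has_cycle_def
    apply (rule exI[of _ "[a1,a2,a3]"])
    using assms(1,5) ra unfolding C1_def A_def by (auto simp add: lt2)
  have h2: "has_cycle C2 E" unfolding has_cycle_def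
    apply (rule exI[of _ "[b1,b2,b3]"])
    using assms(2,6) rb unfolding C2_def B_def by (auto simp add: lt2)
  show ?thesis unfolding cyclically_separable_def cyclic_vertex_cutset_def
    using c1 c2 ne h1 h2 unfolding S_def by blast
qed
lemma odd_prime_factor: "(n::nat) > 0 \<Longrightarrow> \<not>(\<exists>k. n = 2^k) \<Longrightarrow> \<exists>p. Factorial_Ring.prime p \<and> odd p \<and> p dvd n"
proof (induction n rule: less_induct)
  case (less n)
  show ?case
  proof (cases "even n")
    case True
    then obtain m where m: "n = 2*m" by blast
    have m0: "m > 0" "m < n" using less.prems m by auto
    have "\<not>(\<exists>k. m = 2^k)"
    proof
      assume "\<exists>k. m = 2^k"
      then obtain k where "m = 2^k" by blast
      then have "n = 2^Suc k" using m by simp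
      with less.prems show False by blast
    qed
    then obtain p where "Factorial_Ring.prime p" "odd p" "p dvd m" using less.IH m0 by blast
    then show ?thesis using m by (auto intro: dvd_mult)
  next
    case False
    have "n \<noteq> 1" using less.prems(2) by (metis power_0)
    then obtain p where p: "Factorial_Ring.prime p" "p dvd n" using prime_factor_nat by blast
    have "odd p"
    proof
      assume "even p"
      with p(2) have "even n" using dvd_trans by blast
      with False show False by simp
    qed
    then show ?thesis using p by blast
  qed
qed

lemma nd: assumes "Factorial_Ring.prime (p::nat)" "odd p"
  shows "\<not> (4::nat) dvd 2*p" "\<not> 2*p dvd (4::nat)" "\<not> (4::nat) dvd p" "\<not> p dvd (4::nat)" "p \<ge> 3"
proof -
  have p2: "p \<ge> 2" using assms(1) prime_ge_2_nat by blast
  then show p3: "p \<ge> 3" using assms(2) by (cases "p = 2") auto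
  have nd2: "\<not> p dvd 2"
  proof
    assume "p dvd 2"
    then have "p \<le> 2" by (rule dvd_imp_le) simp
    with p3 show False by simp
  qed
  show "\<not> (4::nat) dvd 2*p"
  proof
    assume "(4::nat) dvd 2*p"
    then obtain cc :: nat where "2 * p = 4 * cc" by (elim dvdE) auto
    then have "p = 2 * cc" by simp
    with assms(2) show False by simp
  qed
  show "\<not> 2*p dvd (4::nat)"
  proof
    assume "2*p dvd (4::nat)"
    then obtain cc :: nat where "4 = 2 * p * cc" by (elim dvdE) auto
    then have "2 = p * cc" by (simp add: mult.commute)
    then have "p dvd 2" by (metis dvd_triv_left)
    with nd2 show False by simp
  qed
  show "\<not> (4::nat) dvd p"
  proof
    assume "(4::nat) dvd p"
    then have "(2::nat) dvd p" by (rule dvd_trans[rotated]) simp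
    with assms(2) show False by simp
  qed
  show "\<not> p dvd (4::nat)"
  proof
    assume "p dvd (4::nat)"
    then have "p dvd 2*2" by simp
    then have "p dvd 2" using assms(1) prime_dvd_mult_iff by blast
    with nd2 show False by simp
  qed
qed
theorem mainTheorem2:
  fixes n :: nat
  assumes "n \<ge> 2"
  shows "cyclically_separable (carrier (dicyclic_group n))
           (order_supergraph_adj (dicyclic_group n))
         \<longleftrightarrow> \<not> (\<exists>k. n = 2 ^ k)"
proof
  have n0: "n > 0" using assms by simp
  assume sep: "cyclically_separable (carrier (dicyclic_group n)) (order_supergraph_adj (dicyclic_group n))"
  show "\<not> (\<exists>k. n = 2 ^ k)"
  proof
    assume "\<exists>k. n = 2 ^ k"
    then obtain k where k: "n = 2 ^ k" by blast
    have pw: "\<exists>a. group.ord (dicyclic_group n) u = 2^a" if "u \<in> carrier (dicyclic_group n)" for u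
    proof -
      obtain i j where u0: "u = (i,j)" by (cases u)
      have u: "u = (i,j)" "i < 2*n" "j < 2" using that u0 by (auto simp: dicyclic_group_def)
      have "group.ord (dicyclic_group n) u dvd 2^(k+2)"
      proof (cases "j = 0")
        case True
        then have "group.ord (dicyclic_group n) u dvd 2*n" using ord_a_dvd u n0 by simp
        moreover have "2*n dvd 2^(k+2)" using k by (simp add: power_add)
        ultimately show ?thesis by (rule dvd_trans)
      next
        case False
        then have "j = 1" using u by simp
        then have "group.ord (dicyclic_group n) u = 2^2" using ord_b u n0 by simp
        moreover have "(2::nat)^2 dvd 2^(k+2)" by (rule le_imp_power_dvd) simp
        ultimately show ?thesis by simp
      qed
      then obtain a where "a \<le> k+2" "group.ord (dicyclic_group n) u = 2^a"
        using divides_primepow_nat[of 2 "group.ord (dicyclic_group n) u" "k+2"] by auto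
      then show ?thesis by blast
    qed
    have "\<forall>u\<in>carrier (dicyclic_group n). \<forall>v\<in>carrier (dicyclic_group n). u \<noteq> v \<longrightarrow> order_supergraph_adj (dicyclic_group n) u v"
    proof (intro ballI impI)
      fix u v assume uv: "u \<in> carrier (dicyclic_group n)" "v \<in> carrier (dicyclic_group n)" "u \<noteq> v"
      obtain a where a: "group.ord (dicyclic_group n) u = 2^a" using pw uv by blast
      obtain b where b: "group.ord (dicyclic_group n) v = 2^b" using pw uv by blast
      have "(2::nat)^a dvd 2^b \<or> (2::nat)^b dvd 2^a"
        by (cases "a \<le> b") (auto intro: le_imp_power_dvd)
      then show "order_supergraph_adj (dicyclic_group n) u v"
        unfolding order_supergraph_adj_def using a b uv by simp
    qed
    with complete_not_sep sep show False by blast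
  qed
next
  have n0: "n > 0" using assms by simp
  assume np: "\<not> (\<exists>k. n = 2 ^ k)"
  obtain p where p: "Factorial_Ring.prime p" "odd p" "p dvd n" using odd_prime_factor np n0 by blast
  obtain q where q: "n = p*q" using p(3) by blast
  note nd = nd[OF p(1,2)]
  have q0: "q > 0" using q n0 by (cases "q = 0") auto
  have p0: "p > 0" using nd(5) by simp
  have lt: "4*q < 2*n" using q nd(5) q0 by simp
  have o1: "group.ord (dicyclic_group n) (q,0) = 2*p"
  proof (rule ord_a[OF n0])
    show "q < 2*n" using lt by simp
    fix m
    have "(m*q) mod (2*n) = 0 \<longleftrightarrow> (2*p)*q dvd m*q" using q by (simp add: dvd_eq_mod_eq_0 mult.assoc)
    also have "\<dots> \<longleftrightarrow> 2*p dvd m" using q0 by (simp add: dvd_mult_cancel_right)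
    finally show "(m*q) mod (2*n) = 0 \<longleftrightarrow> 2*p dvd m" .
  qed
  have o2: "group.ord (dicyclic_group n) (2*q,0) = p"
  proof (rule ord_a[OF n0])
    show "2*q < 2*n" using lt by simp
    fix m
    have "(m*(2*q)) mod (2*n) = 0 \<longleftrightarrow> p*(2*q) dvd m*(2*q)" using q by (simp add: dvd_eq_mod_eq_0 ac_simps)
    also have "\<dots> \<longleftrightarrow> p dvd m" using q0 by (simp add: dvd_mult_cancel_right)
    finally show "(m*(2*q)) mod (2*n) = 0 \<longleftrightarrow> p dvd m" .
  qed
  have o3: "group.ord (dicyclic_group n) (4*q,0) = p"
  proof (rule ord_a[OF n0])
    show "4*q < 2*n" using lt by simp
    fix m
    have "(m*(4*q)) mod (2*n) = 0 \<longleftrightarrow> p*(2*q) dvd (2*m)*(2*q)" using q by (simp add: dvd_eq_mod_eq_0 ac_simps)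
    also have "\<dots> \<longleftrightarrow> p dvd 2*m" using q0 by (simp add: dvd_mult_cancel_right)
    also have "\<dots> \<longleftrightarrow> p dvd m" using p(1) nd(4) prime_dvd_mult_iff
      by (metis dvd_mult2 numeral_Bit0 mult_2)
    finally show "(m*(4*q)) mod (2*n) = 0 \<longleftrightarrow> p dvd m" .
  qed
  have ob: "group.ord (dicyclic_group n) (i,1) = 4" if "i < 2*n" for i
    using ord_b[OF n0 that] .
  have i2: "(2::nat) < 2*n" "(1::nat) < 2*n" "(0::nat) < 2*n" using assms by auto
  show "cyclically_separable (carrier (dicyclic_group n)) (order_supergraph_adj (dicyclic_group n))"
  proof (rule sep[of "(0,1)" "(1,1)" "(2,1)" "(q,0)" "(2*q,0)" "(4*q,0)"])
    show "distinct [(0::nat,1::nat),(1,1),(2,1)]" by simp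
    show "distinct [(q,0::nat),(2*q,0),(4*q,0)]" using q0 by simp
    show "{(0::nat,1::nat),(1,1),(2,1)} \<subseteq> carrier (dicyclic_group n)" using i2 by (simp add: dicyclic_group_def)
    show "{(q,0::nat),(2*q,0),(4*q,0)} \<subseteq> carrier (dicyclic_group n)" using lt by (simp add: dicyclic_group_def)
    show "\<forall>u\<in>{(0::nat,1::nat),(1,1),(2,1)}. \<forall>v\<in>{(0,1),(1,1),(2,1)}. u \<noteq> v \<longrightarrow> order_supergraph_adj (dicyclic_group n) u v"
      unfolding order_supergraph_adj_def using ob i2 by auto
    show "\<forall>u\<in>{(q,0::nat),(2*q,0),(4*q,0)}. \<forall>v\<in>{(q,0),(2*q,0),(4*q,0)}. u \<noteq> v \<longrightarrow> order_supergraph_adj (dicyclic_group n) u v"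
      unfolding order_supergraph_adj_def using o1 o2 o3 by auto
    show "\<forall>u\<in>{(q,0::nat),(2*q,0),(4*q,0)}. \<forall>v\<in>{(0,1),(1,1),(2,1)}. \<not> order_supergraph_adj (dicyclic_group n) u v"
      unfolding order_supergraph_adj_def using o1 o2 o3 ob i2 nd by auto
    show "{(0::nat,1::nat),(1,1),(2,1)} \<inter> {(q,0),(2*q,0),(4*q,0)} = {}" by auto
  qed
qed
end
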